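(* Let $E$ be an equation in the unknowns $x_1,\dots,x_n$. (1) $\mathcal S_E=0$ if and only if $E$ is trivial. (2) If $\mathcal S_E\ne0$ and $\mathcal S_E(\beta)=0$ for some $\beta\in\mathbb N_0^n$, then $(\beta)_i=0$ for at least two indices $i$.
   Context: An equation is a pair $E=(u,v)$ of words over $\{x_1,\dots,x_n\}$, trivial if $u=v$. For $E=(x_{i_1}\cdots x_{i_r},\,x_{j_1}\cdots x_{j_s})$ define $S_{E,x_j}=\sum_{a:\,i_a=j}\prod_{t=1}^{a-1}X_{i_t}-\sum_{a:\,j_a=j}\prod_{t=1}^{a-1}X_{j_t}\in\mathbb Z[X_1,\dots,X_n]$ (empty product $=1$), $\mathcal S_E=(S_{E,x_1},\dots,S_{E,x_n})$. For $\beta\in\mathbb N_0^n$ and a polynomial $p$, $p(\beta)\in\mathbb Z[x]$ is the image under $X_i\mapsto x^{(\beta)_i}$, and $\mathcal S_E(\beta)=(S_{E,x_1}(\beta),\dots,S_{E,x_n}(\beta))$. *)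

theory Defs
  imports "HOL-Library.Poly_Mapping" "HOL-Computational_Algebra.Polynomial"
begin

(* Unknowns x_1..x_n are represented by the indices 0..n-1 (0-based).
  A word is a list of indices; an equation is a pair of words (u, v).
  Multivariate polynomials in Z[X_0..X_{n-1}] are represented as finitely supported
  maps from monomials (exponent vectors, nat \<Rightarrow>\<^sub>0 nat) to integer coefficients.*)

type_synonym mpoly_int = "(nat \<Rightarrow>\<^sub>0 nat) \<Rightarrow>\<^sub>0 int"

definition word_monom :: "nat list \<Rightarrow> (nat \<Rightarrow>\<^sub>0 nat)" where
  "word_monom w = sum_list (map (\<lambda>x. Poly_Mapping.single x 1) w)"

definition mp_term :: "(nat \<Rightarrow>\<^sub>0 nat) \<Rightarrow> int \<Rightarrow> mpoly_int" where
  "mp_term m c = Poly_Mapping.single m c"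

definition word_part :: "nat list \<Rightarrow> nat \<Rightarrow> mpoly_int" where
  "word_part w j = (\<Sum>a\<in>{a. a < length w \<and> w ! a = j}. mp_term (word_monom (take a w)) 1)"

definition S_comp :: "nat list \<Rightarrow> nat list \<Rightarrow> nat \<Rightarrow> mpoly_int" where
  "S_comp u v j = word_part u j - word_part v j"

definition S_E :: "nat \<Rightarrow> nat list \<Rightarrow> nat list \<Rightarrow> mpoly_int list" where
  "S_E n u v = map (S_comp u v) [0..<n]"

definition eval_at :: "(nat \<Rightarrow> nat) \<Rightarrow> mpoly_int \<Rightarrow> int poly" where
  "eval_at \<beta> p = (\<Sum>m\<in>Poly_Mapping.keys p.
      monom (Poly_Mapping.lookup p m) (\<Sum>i\<in>Poly_Mapping.keys m. Poly_Mapping.lookup m i * \<beta> i))"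

definition S_E_at :: "(nat \<Rightarrow> nat) \<Rightarrow> nat \<Rightarrow> nat list \<Rightarrow> nat list \<Rightarrow> int poly list" where
  "S_E_at \<beta> n u v = map (\<lambda>j. eval_at \<beta> (S_comp u v j)) [0..<n]"

end

theory Submission imports Defs "HOL-Library.Multiset" begin

definition lin :: "(nat \<Rightarrow> nat) \<Rightarrow> (nat \<Rightarrow>\<^sub>0 nat) \<Rightarrow> nat" where
  "lin \<beta> m = (\<Sum>i\<in>Poly_Mapping.keys m. Poly_Mapping.lookup m i * \<beta> i)"

lemma lin_sup: "finite K \<Longrightarrow> Poly_Mapping.keys m \<subseteq> K \<Longrightarrow>
   lin \<beta> m = (\<Sum>i\<in>K. Poly_Mapping.lookup m i * \<beta> i)"
  unfolding lin_def by (rule sum.mono_neutral_left) (auto simp: in_keys_iff)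

lemma lin_add: "lin \<beta> (m1 + m2) = lin \<beta> m1 + lin \<beta> m2"
proof -
  let ?K = "Poly_Mapping.keys m1 \<union> Poly_Mapping.keys m2"
  have "lin \<beta> (m1 + m2) = (\<Sum>i\<in>?K. Poly_Mapping.lookup (m1+m2) i * \<beta> i)"
    using keys_add[of m1 m2] by (intro lin_sup) auto
  also have "\<dots> = (\<Sum>i\<in>?K. Poly_Mapping.lookup m1 i * \<beta> i) + (\<Sum>i\<in>?K. Poly_Mapping.lookup m2 i * \<beta> i)"
    by (simp add: lookup_add sum.distrib algebra_simps)
  also have "\<dots> = lin \<beta> m1 + lin \<beta> m2"
    by (simp add: lin_sup[symmetric])
  finally show ?thesis .
qed

lemma lin_word: "lin \<beta> (word_monom w) = sum_list (map \<beta> w)"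
  by (induction w) (simp_all add: word_monom_def lin_add, simp_all add: lin_def)

lemma eval_sup: "finite K \<Longrightarrow> Poly_Mapping.keys p \<subseteq> K \<Longrightarrow>
   eval_at \<beta> p = (\<Sum>m\<in>K. monom (Poly_Mapping.lookup p m) (lin \<beta> m))"
  unfolding eval_at_def lin_def by (rule sum.mono_neutral_left) (auto simp: in_keys_iff)

lemma eval_add: "eval_at \<beta> (p + q) = eval_at \<beta> p + eval_at \<beta> q"
proof -
  let ?K = "Poly_Mapping.keys p \<union> Poly_Mapping.keys q"
  have "eval_at \<beta> (p + q) = (\<Sum>m\<in>?K. monom (Poly_Mapping.lookup (p+q) m) (lin \<beta> m))"
    using keys_add[of p q] by (intro eval_sup) auto
  also have "\<dots> = (\<Sum>m\<in>?K. monom (Poly_Mapping.lookup p m) (lin \<beta> m)) + (\<Sum>m\<in>?K. monom (Poly_Mapping.lookup q m) (lin \<beta> m))"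
    by (simp add: lookup_add sum.distrib[symmetric] add_monom)
  also have "\<dots> = eval_at \<beta> p + eval_at \<beta> q"
    by (simp add: eval_sup[symmetric])
  finally show ?thesis .
qed

lemma eval_zero: "eval_at \<beta> 0 = 0" by (simp add: eval_at_def)

lemma eval_diff: "eval_at \<beta> (p - q) = eval_at \<beta> p - eval_at \<beta> q"
  using eval_add[of \<beta> q "p - q"] by simp

lemma eval_sum: "eval_at \<beta> (\<Sum>a\<in>A. f a) = (\<Sum>a\<in>A. eval_at \<beta> (f a))"
  by (induction A rule: infinite_finite_induct) (simp_all add: eval_zero eval_add)

lemma eval_term: "eval_at \<beta> (mp_term m 1) = monom 1 (lin \<beta> m)"
  by (simp add: eval_at_def mp_term_def lin_def lookup_single)

lemma eval_wp: "eval_at \<beta> (word_part w j) =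
  (\<Sum>a\<in>{a. a < length w \<and> w ! a = j}. monom 1 (sum_list (map \<beta> (take a w))))"
  by (simp add: word_part_def eval_sum eval_term lin_word)

lemma coeff_wp: "coeff (eval_at \<beta> (word_part w j)) s =
  int (card {a. a < length w \<and> w ! a = j \<and> sum_list (map \<beta> (take a w)) = s})"
proof -
  have "coeff (eval_at \<beta> (word_part w j)) s =
     (\<Sum>a\<in>{a. a < length w \<and> w ! a = j}. if sum_list (map \<beta> (take a w)) = s then 1 else 0)"
    by (simp add: eval_wp coeff_sum coeff_monom eq_commute)
  also have "\<dots> = (\<Sum>a\<in>{a\<in>{a. a < length w \<and> w ! a = j}. sum_list (map \<beta> (take a w)) = s}. 1)"
    by (rule sum.inter_filter[symmetric]) simp
  also have "{a\<in>{a. a < length w \<and> w ! a = j}. sum_list (map \<beta> (take a w)) = s}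
     = {a. a < length w \<and> w ! a = j \<and> sum_list (map \<beta> (take a w)) = s}" by auto
  finally show ?thesis by simp
qed

fun L :: "(nat \<Rightarrow> nat) \<Rightarrow> nat list \<Rightarrow> (nat \<times> nat) list" where
  "L \<beta> [] = []"
| "L \<beta> (x # w) = (x, 0) # map (\<lambda>(j, s). (j, \<beta> x + s)) (L \<beta> w)"

lemma L_conv: "L \<beta> w = map (\<lambda>a. (w ! a, sum_list (map \<beta> (take a w)))) [0..<length w]"
  by (induction w) (simp_all add: map_upt_Suc del: upt_Suc)

lemma count_L: "count (mset (L \<beta> w)) (j, s) =
  card {a. a < length w \<and> w ! a = j \<and> sum_list (map \<beta> (take a w)) = s}"
proof -
  have "count (mset (L \<beta> w)) (j, s) = length (filter (\<lambda>p. (j,s) = p) (L \<beta> w))"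
    by (simp add: count_mset count_list_eq_length_filter)
  also have "\<dots> = card {i. i < length (L \<beta> w) \<and> (j,s) = L \<beta> w ! i}"
    by (rule length_filter_conv_card)
  also have "\<dots> = card {a. a < length w \<and> w ! a = j \<and> sum_list (map \<beta> (take a w)) = s}"
    by (rule arg_cong[where f=card]) (auto simp: L_conv)
  finally show ?thesis .
qed

lemma L_len: "length (L \<beta> w) = length w"
  by (simp add: L_conv)

lemma core: "mset (L \<beta> u) = mset (L \<beta> v) \<Longrightarrow> \<forall>j\<in>set u \<union> set v. j \<noteq> z \<longrightarrow> \<beta> j > 0 \<Longrightarrow> u = v"
proof (induction u arbitrary: v)
  case Nil
  then have "L \<beta> v = []" by simp
  then show ?case using L_len[of \<beta> v] by simp
next
  case (Cons x u)
  show ?case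
  proof (cases v)
    case Nil
    then show ?thesis using Cons.prems by simp
  next
    case (Cons y v')
    note eq = Cons.prems(1)[unfolded Cons]
    note pos = Cons.prems(2)[unfolded Cons]
    have xy: "x = y"
    proof (rule ccontr)
      assume ne: "x \<noteq> y"
      have "(x, 0) \<in> set (L \<beta> (y # v'))"
        using eq by (metis list.set_intros(1) L.simps(2) set_mset_mset)
      then have "(x, 0) \<in> set (map (\<lambda>(j, s). (j, \<beta> y + s)) (L \<beta> v'))" using ne by simp
      then have "\<beta> y = 0" by auto
      then have yz: "y = z" using pos by auto
      have "(y, 0) \<in> set (L \<beta> (x # u))"
        using eq by (metis list.set_intros(1) L.simps(2) set_mset_mset)
      then have "(y, 0) \<in> set (map (\<lambda>(j, s). (j, \<beta> x + s)) (L \<beta> u))" using ne by simp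
      then have "\<beta> x = 0" by auto
      then have "x = z" using pos by auto
      with yz ne show False by simp
    qed
    define f where "f = (\<lambda>(j::nat, s). (j, \<beta> x + s))"
    define g where "g = (\<lambda>(j::nat, s). (j, s - \<beta> x))"
    have "image_mset f (mset (L \<beta> u)) = image_mset f (mset (L \<beta> v'))"
      using eq xy by (simp add: f_def)
    then have "image_mset g (image_mset f (mset (L \<beta> u))) = image_mset g (image_mset f (mset (L \<beta> v')))"
      by simp
    moreover have "g \<circ> f = id" by (auto simp: f_def g_def)
    ultimately have "mset (L \<beta> u) = mset (L \<beta> v')"
      by (simp add: multiset.map_comp)
    then have "u = v'" using Cons.IH pos by auto
    then show ?thesis using xy Cons by simp
  qed
qed

lemma main:
  assumes su: "set u \<subseteq> {..<n}" and sv: "set v \<subseteq> {..<n}"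
    and ev: "\<forall>j<n. eval_at \<beta> (S_comp u v j) = 0"
    and pos: "\<forall>j<n. j \<noteq> z \<longrightarrow> \<beta> j > 0"
  shows "u = v"
proof (rule core[of \<beta> u v z])
  show "\<forall>j\<in>set u \<union> set v. j \<noteq> z \<longrightarrow> \<beta> j > 0" using su sv pos by auto
  show "mset (L \<beta> u) = mset (L \<beta> v)"
  proof (rule multiset_eqI)
    fix p :: "nat \<times> nat"
    obtain j s where p: "p = (j, s)" by (cases p)
    show "count (mset (L \<beta> u)) p = count (mset (L \<beta> v)) p"
    proof (cases "j < n")
      case True
      then have "eval_at \<beta> (word_part u j) - eval_at \<beta> (word_part v j) = 0"
        using ev by (simp add: S_comp_def eval_diff)
      then have "coeff (eval_at \<beta> (word_part u j)) s = coeff (eval_at \<beta> (word_part v j)) s"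
        by simp
      then show ?thesis by (simp add: p count_L coeff_wp)
    next
      case False
      have "{a. a < length u \<and> u ! a = j \<and> sum_list (map \<beta> (take a u)) = s} = {}"
        using su False by (auto dest!: nth_mem)
      moreover have "{a. a < length v \<and> v ! a = j \<and> sum_list (map \<beta> (take a v)) = s} = {}"
        using sv False by (auto dest!: nth_mem)
      ultimately show ?thesis by (simp only: p count_L)
    qed
  qed
qed

lemma SE_zero: "S_E n u v = replicate n 0 \<Longrightarrow> j < n \<Longrightarrow> S_comp u v j = 0"
proof -
  assume h: "S_E n u v = replicate n 0" and j: "j < n"
  have "S_E n u v ! j = replicate n 0 ! j" by (simp add: h)
  then show ?thesis using j by (simp add: S_E_def)
qed

lemma SE_at_zero: "S_E_at \<beta> n u v = replicate n 0 \<Longrightarrow> j < n \<Longrightarrow> eval_at \<beta> (S_comp u v j) = 0"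
proof -
  assume h: "S_E_at \<beta> n u v = replicate n 0" and j: "j < n"
  have "S_E_at \<beta> n u v ! j = replicate n 0 ! j" by (simp add: h)
  then show ?thesis using j by (simp add: S_E_at_def)
qed

lemma map_zero_rep: "map (\<lambda>x. 0) xs = replicate (length xs) 0"
  by (induction xs) auto

lemma SE_refl: "S_E n u u = replicate n 0"
  unfolding S_E_def S_comp_def
  by (simp add: map_zero_rep)

theorem lemma3p1:
  fixes n :: nat and u v :: "nat list"
  assumes "set u \<subseteq> {..<n}" and "set v \<subseteq> {..<n}"
  shows "(S_E n u v = replicate n 0 \<longleftrightarrow> u = v) \<and>
         (\<forall>\<beta> :: nat \<Rightarrow> nat. S_E n u v \<noteq> replicate n 0 \<and> S_E_at \<beta> n u v = replicate n 0 \<longrightarrow>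
           (\<exists>i j. i < n \<and> j < n \<and> i \<noteq> j \<and> \<beta> i = 0 \<and> \<beta> j = 0))"
proof (intro conjI allI impI)
  show "S_E n u v = replicate n 0 \<longleftrightarrow> u = v"
  proof
    assume h: "S_E n u v = replicate n 0"
    show "u = v"
    proof (rule main[OF assms, of "\<lambda>_. 1" n])
      show "\<forall>j<n. eval_at (\<lambda>_. 1) (S_comp u v j) = 0"
        using SE_zero[OF h] by (simp add: eval_zero)
    qed simp
  next
    assume "u = v" then show "S_E n u v = replicate n 0" by (simp add: SE_refl)
  qed
next
  fix \<beta> :: "nat \<Rightarrow> nat"
  assume h: "S_E n u v \<noteq> replicate n 0 \<and> S_E_at \<beta> n u v = replicate n 0"
  show "\<exists>i j. i < n \<and> j < n \<and> i \<noteq> j \<and> \<beta> i = 0 \<and> \<beta> j = 0"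
  proof (rule ccontr)
    assume nt: "\<not> ?thesis"
    obtain z where z: "\<forall>j<n. j \<noteq> z \<longrightarrow> \<beta> j > 0"
    proof (cases "\<exists>z<n. \<beta> z = 0")
      case True
      then obtain z where "z < n" "\<beta> z = 0" by blast
      then have "\<forall>j<n. j \<noteq> z \<longrightarrow> \<beta> j > 0" using nt by (metis gr0I)
      then show ?thesis using that by blast
    next
      case False
      then have "\<forall>j<n. j \<noteq> n \<longrightarrow> \<beta> j > 0" by auto
      then show ?thesis using that by blast
    qed
    have "u = v"
      by (rule main[OF assms _ z]) (use h SE_at_zero in blast)
    then show False using h SE_refl by simp
  qed
qed


end
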